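(* Let $\div$ be an AGM contraction operator for epistemic states. The following are equivalent: (a) $\div$ satisfies (C8) and (C9), i.e. for all epistemic states $\Psi$ and formulas $\alpha,\beta$: (C8) if $\neg\alpha\models\beta$ then $\mathrm{Bel}(\Psi\div\alpha\div\beta) =_\alpha \mathrm{Bel}(\Psi\div\beta)$; (C9) if $\alpha\models\beta$ then $\mathrm{Bel}(\Psi\div\alpha\div\beta) =_{\neg\beta} \mathrm{Bel}(\Psi\div\beta)$. (b) There is a faithful assignment $\Psi\mapsto\le_\Psi$ such that $[\![\Psi\div\alpha]\!]=[\![\Psi]\!]\cup\min([\![\neg\alpha]\!],\le_\Psi)$ for all $\Psi,\alpha$, and which satisfies for all $\Psi,\alpha$ and worlds $\omega_1,\omega_2$: (CR8) if $\omega_1,\omega_2\in[\![\alpha]\!]$ then $\omega_1\le_\Psi\omega_2 \Leftrightarrow \omega_1\le_{\Psi\div\alpha}\omega_2$; (CR9) if $\omega_1,\omega_2\in[\![\neg\alpha]\!]$ then $\omega_1\le_\Psi\omega_2 \Leftrightarrow \omega_1\le_{\Psi\div\alpha}\omega_2$.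
   Context: $\Sigma$ is a nonempty finite set of propositional variables, $\mathcal{L}$ the propositional language over $\Sigma$, $\Omega$ the set of worlds. $[\![\alpha]\!]$ is the set of models of $\alpha$; for a set $X$ of formulas $[\![X]\!]$ is the set of worlds satisfying all of $X$; $Cn(X)=\{\beta\mid X\models\beta\}$. $\mathcal{E}$ is a set of epistemic states; each $\Psi\in\mathcal{E}$ has a deductively closed belief set $\mathrm{Bel}(\Psi)\subseteq\mathcal{L}$; $\Psi\models\alpha$ iff $\alpha\in\mathrm{Bel}(\Psi)$; $[\![\Psi]\!]=[\![\mathrm{Bel}(\Psi)]\!]$. A belief change operator is a map $\div:\mathcal{E}\times\mathcal{L}\to\mathcal{E}$; $\Psi\div\alpha\div\beta$ means $(\Psi\div\alpha)\div\beta$. An AGM contraction operator for epistemic states is a belief change operator satisfying for all $\Psi,\alpha,\beta$: (C1) $\mathrm{Bel}(\Psi\div\alpha)\subseteq\mathrm{Bel}(\Psi)$; (C2) if $\alpha\notin\mathrm{Bel}(\Psi)$ then $\mathrm{Bel}(\Psi)\subseteq\mathrm{Bel}(\Psi\div\alpha)$; (C3) if $\alpha\not\equiv\top$ then $\alpha\notin\mathrm{Bel}(\Psi\div\alpha)$; (C4) $\mathrm{Bel}(\Psi)\subseteq Cn(\mathrm{Bel}(\Psi\div\alpha)\cup\{\alpha\})$; (C5) if $\alpha\equiv\beta$ then $\mathrm{Bel}(\Psi\div\alpha)=\mathrm{Bel}(\Psi\div\beta)$; (C6) $\mathrm{Bel}(\Psi\div\alpha)\cap\mathrm{Bel}(\Psi\div\beta)\subseteq\mathrm{Bel}(\Psi\div(\alpha\land\beta))$;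 (C7) if $\beta\notin\mathrm{Bel}(\Psi\div(\alpha\land\beta))$ then $\mathrm{Bel}(\Psi\div(\alpha\land\beta))\subseteq\mathrm{Bel}(\Psi\div\beta)$. For a total preorder $\le$ on $\Omega$ and $\Omega'\subseteq\Omega$, $\min(\Omega',\le)=\{\omega\in\Omega'\mid \omega\le\omega' \text{ for all }\omega'\in\Omega'\}$; $<$ is the strict part and $\simeq$ the induced equivalence. A faithful assignment maps each $\Psi$ to a total preorder $\le_\Psi$ on $\Omega$ with (FA1) $\omega_1,\omega_2\in[\![\Psi]\!]\Rightarrow\omega_1\simeq_\Psi\omega_2$ and (FA2) $\omega_1\in[\![\Psi]\!],\omega_2\notin[\![\Psi]\!]\Rightarrow\omega_1<_\Psi\omega_2$. Known fact: $\div$ is an AGM contraction operator for epistemic states iff there is a faithful assignment with $[\![\Psi\div\alpha]\!]=[\![\Psi]\!]\cup\min([\![\neg\alpha]\!],\le_\Psi)$ for all $\Psi,\alpha$. $\alpha$-equivalence: for $\Omega_1,\Omega_2\subseteq\Omega$, $\Omega_1=_\alpha\Omega_2$ iff $\Omega_1\cap[\![\alpha]\!]=\Omega_2\cap[\![\alpha]\!]$; for sets of formulas $X=_\alpha Y$ iff $[\![X]\!]=_\alpha[\![Y]\!]$. *)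

theory Defs
  imports Main
begin

text \<open>Propositional language over a finite nonempty signature, given by a
finite type 'v of propositional variables (types are nonempty).\<close>

datatype 'v fm = Var 'v | Top | Bot | Neg "'v fm" | Conj "'v fm" "'v fm"
  | Disj "'v fm" "'v fm" | Imp "'v fm" "'v fm"

type_synonym 'v world = "'v \<Rightarrow> bool"

fun sat :: "'v world \<Rightarrow> 'v fm \<Rightarrow> bool" where
  "sat w (Var p) = w p"
| "sat w Top = True"
| "sat w Bot = False"
| "sat w (Neg a) = (\<not> sat w a)"
| "sat w (Conj a b) = (sat w a \<and> sat w b)"
| "sat w (Disj a b) = (sat w a \<or> sat w b)"
| "sat w (Imp a b) = (sat w a \<longrightarrow> sat w b)"

definition mods :: "'v fm \<Rightarrow> 'v world set" where
  "mods a = {w. sat w a}"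

definition modsSet :: "'v fm set \<Rightarrow> 'v world set" where
  "modsSet X = {w. \<forall>a\<in>X. sat w a}"

definition entails :: "'v fm set \<Rightarrow> 'v fm \<Rightarrow> bool" where
  "entails X b \<longleftrightarrow> modsSet X \<subseteq> mods b"

definition Cn :: "'v fm set \<Rightarrow> 'v fm set" where
  "Cn X = {b. entails X b}"

definition fequiv :: "'v fm \<Rightarrow> 'v fm \<Rightarrow> bool" where
  "fequiv a b \<longleftrightarrow> mods a = mods b"

definition alpha_eq :: "'v fm \<Rightarrow> 'v fm set \<Rightarrow> 'v fm set \<Rightarrow> bool" where
  "alpha_eq a X Y \<longleftrightarrow> modsSet X \<inter> mods a = modsSet Y \<inter> mods a"

text \<open>Epistemic states: an arbitrary type 'e with belief-set function Bel,
required to be deductively closed.\<close>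
definition bel_closed :: "('e \<Rightarrow> 'v fm set) \<Rightarrow> bool" where
  "bel_closed Bel \<longleftrightarrow> (\<forall>\<Psi>. Cn (Bel \<Psi>) = Bel \<Psi>)"

definition agm_contraction ::
  "('e \<Rightarrow> 'v fm set) \<Rightarrow> ('e \<Rightarrow> 'v fm \<Rightarrow> 'e) \<Rightarrow> bool" where
  "agm_contraction Bel c \<longleftrightarrow> (\<forall>\<Psi> a b.
     Bel (c \<Psi> a) \<subseteq> Bel \<Psi>
   \<and> (a \<notin> Bel \<Psi> \<longrightarrow> Bel \<Psi> \<subseteq> Bel (c \<Psi> a))
   \<and> (\<not> fequiv a Top \<longrightarrow> a \<notin> Bel (c \<Psi> a))
   \<and> Bel \<Psi> \<subseteq> Cn (Bel (c \<Psi> a) \<union> {a})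
   \<and> (fequiv a b \<longrightarrow> Bel (c \<Psi> a) = Bel (c \<Psi> b))
   \<and> Bel (c \<Psi> a) \<inter> Bel (c \<Psi> b) \<subseteq> Bel (c \<Psi> (Conj a b))
   \<and> (b \<notin> Bel (c \<Psi> (Conj a b)) \<longrightarrow> Bel (c \<Psi> (Conj a b)) \<subseteq> Bel (c \<Psi> b)))"

definition total_preorder :: "('w \<Rightarrow> 'w \<Rightarrow> bool) \<Rightarrow> bool" where
  "total_preorder le \<longleftrightarrow> (\<forall>x y. le x y \<or> le y x) \<and> (\<forall>x y z. le x y \<longrightarrow> le y z \<longrightarrow> le x z)"

definition minset :: "'w set \<Rightarrow> ('w \<Rightarrow> 'w \<Rightarrow> bool) \<Rightarrow> 'w set" where
  "minset S le = {w \<in> S. \<forall>w'\<in>S. le w w'}"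

definition faithful_assignment ::
  "('e \<Rightarrow> 'v fm set) \<Rightarrow> ('e \<Rightarrow> 'v world \<Rightarrow> 'v world \<Rightarrow> bool) \<Rightarrow> bool" where
  "faithful_assignment Bel ord \<longleftrightarrow> (\<forall>\<Psi>. total_preorder (ord \<Psi>)
     \<and> (\<forall>w1 w2. w1 \<in> modsSet (Bel \<Psi>) \<longrightarrow> w2 \<in> modsSet (Bel \<Psi>)
            \<longrightarrow> ord \<Psi> w1 w2 \<and> ord \<Psi> w2 w1)
     \<and> (\<forall>w1 w2. w1 \<in> modsSet (Bel \<Psi>) \<longrightarrow> w2 \<notin> modsSet (Bel \<Psi>)
            \<longrightarrow> ord \<Psi> w1 w2 \<and> \<not> ord \<Psi> w2 w1))"

end

theory Submission
  imports Defs
begin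

definition chrl :: "'v list \<Rightarrow> 'v world \<Rightarrow> 'v fm" where
  "chrl xs w = foldr (\<lambda>p acc. Conj (if w p then Var p else Neg (Var p)) acc) xs Top"

lemma sat_chrl: "sat u (chrl xs w) \<longleftrightarrow> (\<forall>p\<in>set xs. u p = w p)"
  by (induction xs) (auto simp: chrl_def)

definition chr :: "('v::finite) world \<Rightarrow> 'v fm" where
  "chr w = chrl (SOME xs. set xs = (UNIV::'v set)) w"

lemma sat_chr: "sat u (chr (w::('v::finite) world)) \<longleftrightarrow> u = w"
proof -
  have "\<exists>xs. set xs = (UNIV::'v set)" by (rule finite_list) simp
  then have "set (SOME xs. set xs = (UNIV::'v set)) = UNIV" by (rule someI_ex)
  then show ?thesis unfolding chr_def sat_chrl by auto
qed

definition disjl :: "('v::finite) world list \<Rightarrow> 'v fm" where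
  "disjl ys = foldr (\<lambda>w acc. Disj (chr w) acc) ys Bot"

lemma sat_disjl: "sat u (disjl ys) \<longleftrightarrow> u \<in> set ys"
  by (induction ys) (auto simp: disjl_def sat_chr)

definition fmOf :: "('v::finite) world set \<Rightarrow> 'v fm" where
  "fmOf S = disjl (SOME ys. set ys = S)"

lemma mods_fmOf: "mods (fmOf (S::('v::finite) world set)) = S"
proof -
  have "\<exists>ys. set ys = S" by (rule finite_list) simp
  then have "set (SOME ys. set ys = S) = S" by (rule someI_ex)
  then show ?thesis unfolding fmOf_def mods_def sat_disjl by auto
qed

lemma mods_simps: "mods (Neg a) = - mods a" "mods (Conj a b) = mods a \<inter> mods b"
  "mods Top = UNIV"
  by (auto simp: mods_def)

lemma modsSet_mono: "X \<subseteq> Y \<Longrightarrow> modsSet Y \<subseteq> modsSet X"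
  by (auto simp: modsSet_def)

lemma modsSet_Cn: "modsSet (Cn X) = modsSet X"
  by (auto simp: modsSet_def Cn_def entails_def mods_def)

lemma modsSet_ins: "modsSet (X \<union> {a}) = modsSet X \<inter> mods a"
  by (auto simp: modsSet_def mods_def)

lemma modsSet_single: "modsSet {a} = mods a"
  by (auto simp: modsSet_def mods_def)

lemma closed_mem: "bel_closed Bel \<Longrightarrow> a \<in> Bel P \<longleftrightarrow> modsSet (Bel P) \<subseteq> mods a"
  unfolding bel_closed_def by (metis Cn_def entails_def mem_Collect_eq)

lemma closed_sub: "bel_closed Bel \<Longrightarrow> Bel P \<subseteq> Bel Q \<longleftrightarrow> modsSet (Bel Q) \<subseteq> modsSet (Bel P)"
  using closed_mem[of Bel] modsSet_mono by (metis subsetI order_trans)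

lemma closed_Int: "bel_closed Bel \<Longrightarrow>
  modsSet (Bel (P::'e) \<inter> Bel Q) = modsSet (Bel P) \<union> modsSet (Bel Q :: ('v::finite) fm set)"
proof
  assume cl: "bel_closed Bel"
  show "modsSet (Bel P) \<union> modsSet (Bel Q) \<subseteq> modsSet (Bel P \<inter> Bel Q)"
    using modsSet_mono by (metis Int_lower1 Int_lower2 Un_least)
  show "modsSet (Bel P \<inter> Bel Q) \<subseteq> modsSet (Bel P) \<union> modsSet (Bel Q)"
  proof
    fix w assume w: "w \<in> modsSet (Bel P \<inter> Bel Q)"
    show "w \<in> modsSet (Bel P) \<union> modsSet (Bel Q)"
    proof (rule ccontr)
      assume n: "w \<notin> modsSet (Bel P) \<union> modsSet (Bel Q)"
      let ?f = "fmOf (- {w})"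
      have "?f \<in> Bel P" "?f \<in> Bel Q" using n closed_mem[OF cl] mods_fmOf by auto
      then have "sat w ?f" using w by (auto simp: modsSet_def)
      then show False using mods_fmOf[of "-{w}"] by (auto simp: mods_def)
    qed
  qed
qed

locale agmctx =
  fixes Bel :: "'e \<Rightarrow> ('v::finite) fm set" and c :: "'e \<Rightarrow> 'v fm \<Rightarrow> 'e"
  assumes cl: "bel_closed Bel" and agm: "agm_contraction Bel c"
begin

abbreviation "M P \<equiv> modsSet (Bel P)"
abbreviation "K P a \<equiv> modsSet (Bel (c P a))"
definition "G P S = K P (fmOf (- S))"
definition "ordc P w1 w2 \<longleftrightarrow> w1 \<in> G P {w1, w2}"

lemma P1: "Bel (c P a) \<subseteq> Bel P" using agm unfolding agm_contraction_def by blast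

lemma K1: "M P \<subseteq> K P a"
  using closed_sub[OF cl, of "c P a" P] P1[of P a] by simp

lemma K2: "M P \<inter> - mods a \<noteq> {} \<Longrightarrow> K P a = M P"
proof -
  assume "M P \<inter> - mods a \<noteq> {}"
  then have "a \<notin> Bel P" using closed_mem[OF cl] by blast
  then have "Bel P \<subseteq> Bel (c P a)" using agm unfolding agm_contraction_def by blast
  then have "K P a \<subseteq> M P" using closed_sub[OF cl, of P "c P a"] by simp
  then show ?thesis using K1[of P a] by (rule subset_antisym)
qed

lemma K3: "- mods a \<noteq> {} \<Longrightarrow> K P a \<inter> - mods a \<noteq> {}"
proof -
  assume "- mods a \<noteq> {}"
  then have "\<not> fequiv a Top" by (auto simp: fequiv_def mods_simps)
  then have "a \<notin> Bel (c P a)" using agm unfolding agm_contraction_def by blast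
  then show ?thesis using closed_mem[OF cl] by blast
qed

lemma K4: "K P a \<inter> mods a \<subseteq> M P"
proof -
  have "Bel P \<subseteq> Cn (Bel (c P a) \<union> {a})" using agm unfolding agm_contraction_def by blast
  from modsSet_mono[OF this] show ?thesis by (simp only: modsSet_Cn modsSet_ins)
qed

lemma K5: "mods a = mods b \<Longrightarrow> K P a = K P b"
proof -
  assume e: "mods a = mods b"
  have "fequiv a b \<longrightarrow> Bel (c P a) = Bel (c P b)" using agm unfolding agm_contraction_def by blast
  then show ?thesis using e by (simp add: fequiv_def)
qed

lemma K6: "K P (Conj a b) \<subseteq> K P a \<union> K P b"
proof -
  have "Bel (c P a) \<inter> Bel (c P b) \<subseteq> Bel (c P (Conj a b))"
    using agm unfolding agm_contraction_def by blast
  from modsSet_mono[OF this] show ?thesis by (simp add: closed_Int[OF cl])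
qed

lemma K7: "K P (Conj a b) \<inter> - mods b \<noteq> {} \<Longrightarrow> K P b \<subseteq> K P (Conj a b)"
proof -
  assume "K P (Conj a b) \<inter> - mods b \<noteq> {}"
  then have "b \<notin> Bel (c P (Conj a b))" using closed_mem[OF cl] by blast
  then have "Bel (c P (Conj a b)) \<subseteq> Bel (c P b)" using agm unfolding agm_contraction_def by blast
  then show ?thesis using closed_sub[OF cl, of "c P (Conj a b)" "c P b"] by simp
qed

lemma KG: "K P a = G P (- mods a)"
  unfolding G_def by (rule K5) (simp add: mods_fmOf)

lemma G1: "M P \<subseteq> G P S" unfolding G_def by (rule K1)
lemma G2: "M P \<inter> S \<noteq> {} \<Longrightarrow> G P S = M P" unfolding G_def by (rule K2) (simp add: mods_fmOf)
lemma G3: "S \<noteq> {} \<Longrightarrow> G P S \<inter> S \<noteq> {}" unfolding G_def using K3[of "fmOf (-S)" P] by (simp add: mods_fmOf)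
lemma G4: "G P S \<inter> - S \<subseteq> M P" unfolding G_def using K4[of P "fmOf (-S)"] by (simp add: mods_fmOf)
lemma G6: "G P (S \<union> T) \<subseteq> G P S \<union> G P T"
proof -
  have "G P (S \<union> T) = K P (Conj (fmOf (-S)) (fmOf (-T)))"
    unfolding G_def by (rule K5) (simp add: mods_fmOf mods_simps)
  then show ?thesis using K6 unfolding G_def by simp
qed
lemma G7: "G P (S \<union> T) \<inter> T \<noteq> {} \<Longrightarrow> G P T \<subseteq> G P (S \<union> T)"
proof -
  have e: "G P (S \<union> T) = K P (Conj (fmOf (-S)) (fmOf (-T)))"
    unfolding G_def by (rule K5) (simp add: mods_fmOf mods_simps)
  assume "G P (S \<union> T) \<inter> T \<noteq> {}"
  then show ?thesis using K7[of P "fmOf (-S)" "fmOf (-T)"] e unfolding G_def by (simp add: mods_fmOf)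
qed

lemma Galpha: "w \<in> G P S \<Longrightarrow> w \<in> T \<Longrightarrow> T \<subseteq> S \<Longrightarrow> w \<in> G P T"
proof -
  assume a: "w \<in> G P S" "w \<in> T" "T \<subseteq> S"
  then have "S = T \<union> (S - T)" by blast
  then have "w \<in> G P T \<or> w \<in> G P (S - T)" using G6[of P T "S - T"] a by auto
  then show ?thesis
  proof
    assume "w \<in> G P (S - T)"
    then have "w \<in> M P" using G4[of P "S - T"] a by blast
    then show ?thesis using G1 by blast
  qed
qed

lemma Gbeta: "T \<subseteq> S \<Longrightarrow> G P S \<inter> T \<noteq> {} \<Longrightarrow> G P T \<subseteq> G P S"
  using G7[of P S T] by (simp add: Un_absorb2)

lemma ordc_sym: "{w1, w2} = {w2, w1}" by blast

lemma sel_char: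
  assumes ne: "S \<noteq> {}"
  shows "G P S \<inter> S = {w \<in> S. \<forall>w'\<in>S. ordc P w w'}"
proof (rule equalityI)
  show "G P S \<inter> S \<subseteq> {w \<in> S. \<forall>w'\<in>S. ordc P w w'}"
  proof
    fix w assume w: "w \<in> G P S \<inter> S"
    have "\<forall>w'\<in>S. ordc P w w'"
    proof
      fix w' assume w': "w' \<in> S"
      have "w \<in> G P {w, w'}"
        by (rule Galpha[of w P S]) (use w w' in simp_all)
      then show "ordc P w w'" unfolding ordc_def .
    qed
    then show "w \<in> {w \<in> S. \<forall>w'\<in>S. ordc P w w'}" using w by simp
  qed
  show "{w \<in> S. \<forall>w'\<in>S. ordc P w w'} \<subseteq> G P S \<inter> S"
  proof
    fix w assume w: "w \<in> {w \<in> S. \<forall>w'\<in>S. ordc P w w'}"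
    obtain v where v: "v \<in> G P S" "v \<in> S" using G3[OF ne] by blast
    have "ordc P w v" using w v by simp
    then have "w \<in> G P {w, v}" unfolding ordc_def .
    moreover have "G P {w, v} \<subseteq> G P S"
      by (rule Gbeta) (use w v in auto)
    ultimately have "w \<in> G P S" by (rule subsetD[rotated])
    then show "w \<in> G P S \<inter> S" using w by simp
  qed
qed

lemma ordc_total: "ordc P x y \<or> ordc P y x"
proof -
  have "G P {x, y} \<inter> {x, y} \<noteq> {}" by (rule G3) simp
  then show ?thesis unfolding ordc_def by (auto simp: insert_commute)
qed

lemma ordc_trans: "ordc P x y \<Longrightarrow> ordc P y z \<Longrightarrow> ordc P x z"
proof -
  assume xy: "ordc P x y" and yz: "ordc P y z"
  let ?S = "{x, y, z}"
  have ysel: "y \<in> G P ?S \<Longrightarrow> x \<in> G P ?S"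
  proof -
    assume "y \<in> G P ?S"
    then have "G P {x, y} \<subseteq> G P ?S" by (intro Gbeta) auto
    then show ?thesis using xy unfolding ordc_def by blast
  qed
  have zsel: "z \<in> G P ?S \<Longrightarrow> y \<in> G P ?S"
  proof -
    assume "z \<in> G P ?S"
    then have "G P {y, z} \<subseteq> G P ?S" by (intro Gbeta) auto
    then show ?thesis using yz unfolding ordc_def by blast
  qed
  have "G P ?S \<inter> ?S \<noteq> {}" by (rule G3) simp
  then obtain v where v: "v \<in> G P ?S" "v \<in> ?S" by blast
  from v(2) have "v = x \<or> v = y \<or> v = z" by simp
  then have "x \<in> G P ?S" using v(1) ysel zsel by (elim disjE) simp_all
  then have "x \<in> G P {x, z}" by (rule Galpha[of x P ?S]) auto
  then show ?thesis unfolding ordc_def .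
qed

lemma faithful: "faithful_assignment Bel ordc"
  unfolding faithful_assignment_def total_preorder_def
proof (intro allI conjI impI)
  fix P x y z
  show "ordc P x y \<or> ordc P y x" by (rule ordc_total)
  show "ordc P x y \<Longrightarrow> ordc P y z \<Longrightarrow> ordc P x z" by (rule ordc_trans)
next
  fix P w1 w2 assume "w1 \<in> M P" "w2 \<in> M P"
  then show "ordc P w1 w2" "ordc P w2 w1" unfolding ordc_def using G1 by blast+
next
  fix P w1 w2 assume a: "w1 \<in> M P" "w2 \<notin> M P"
  then show "ordc P w1 w2" unfolding ordc_def using G1 by blast
  have "G P {w2, w1} = M P" using a by (intro G2) auto
  then show "\<not> ordc P w2 w1" using a unfolding ordc_def by simp
qed

lemma repr: "K P a = M P \<union> minset (mods (Neg a)) (ordc P)"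
proof (cases "- mods a = {}")
  case True
  have "K P a = G P {}" using KG True by simp
  moreover have "G P {} \<subseteq> M P" using G4[of P "{}"] by simp
  ultimately show ?thesis using G1[of P "{}"] True by (auto simp: minset_def mods_simps)
next
  case False
  have "G P (- mods a) = M P \<union> (G P (- mods a) \<inter> - mods a)" using G1 G4 by blast
  then show ?thesis using KG sel_char[OF False] by (simp add: minset_def mods_simps)
qed

end

lemma minset_cong: "(\<And>w1 w2. w1 \<in> S \<Longrightarrow> w2 \<in> S \<Longrightarrow> (o1 w1 w2 \<longleftrightarrow> o2 w1 w2)) \<Longrightarrow> minset S o1 = minset S o2"
  unfolding minset_def by blast

lemma minset_sub: "minset S o1 \<subseteq> S" unfolding minset_def by blast

lemma minset_anti: "T \<subseteq> S \<Longrightarrow> minset S o1 \<inter> T \<subseteq> minset T o1"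
  unfolding minset_def by blast

theorem mainTheorem4:
  fixes Bel :: "'e \<Rightarrow> ('v::finite) fm set"
    and c :: "'e \<Rightarrow> 'v fm \<Rightarrow> 'e"
  assumes "bel_closed Bel"
    and "agm_contraction Bel c"
  shows "((\<forall>\<Psi> a b. entails {Neg a} b \<longrightarrow>
              alpha_eq a (Bel (c (c \<Psi> a) b)) (Bel (c \<Psi> b)))
        \<and> (\<forall>\<Psi> a b. entails {a} b \<longrightarrow>
              alpha_eq (Neg b) (Bel (c (c \<Psi> a) b)) (Bel (c \<Psi> b))))
     \<longleftrightarrow>
     (\<exists>ord. faithful_assignment Bel ord
        \<and> (\<forall>\<Psi> a. modsSet (Bel (c \<Psi> a)) = modsSet (Bel \<Psi>) \<union> minset (mods (Neg a)) (ord \<Psi>))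
        \<and> (\<forall>\<Psi> a w1 w2. w1 \<in> mods a \<longrightarrow> w2 \<in> mods a \<longrightarrow>
              (ord \<Psi> w1 w2 \<longleftrightarrow> ord (c \<Psi> a) w1 w2))
        \<and> (\<forall>\<Psi> a w1 w2. w1 \<in> mods (Neg a) \<longrightarrow> w2 \<in> mods (Neg a) \<longrightarrow>
              (ord \<Psi> w1 w2 \<longleftrightarrow> ord (c \<Psi> a) w1 w2)))"
  (is "?A \<longleftrightarrow> ?B")
proof
  assume A: ?A
  interpret agmctx Bel c using assms by unfold_locales
  have C8: "\<And>P a b. entails {Neg a} b \<Longrightarrow>
              modsSet (Bel (c (c P a) b)) \<inter> mods a = modsSet (Bel (c P b)) \<inter> mods a"
    using A[THEN conjunct1, rule_format] unfolding alpha_eq_def by simp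
  have C9: "\<And>P a b. entails {a} b \<Longrightarrow>
              modsSet (Bel (c (c P a) b)) \<inter> - mods b = modsSet (Bel (c P b)) \<inter> - mods b"
    using A[THEN conjunct2, rule_format] unfolding alpha_eq_def mods_simps by simp
  have CR8: "ordc P w1 w2 \<longleftrightarrow> ordc (c P a) w1 w2" if w: "w1 \<in> mods a" "w2 \<in> mods a" for P a w1 w2
  proof -
    let ?b = "fmOf (- {w1, w2})"
    have "entails {Neg a} ?b" unfolding entails_def modsSet_single mods_simps mods_fmOf using w by blast
    from C8[OF this, of P] w show ?thesis unfolding ordc_def G_def by blast
  qed
  have CR9: "ordc P w1 w2 \<longleftrightarrow> ordc (c P a) w1 w2" if w: "w1 \<in> mods (Neg a)" "w2 \<in> mods (Neg a)" for P a w1 w2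
  proof -
    let ?b = "fmOf (- {w1, w2})"
    have "entails {a} ?b" unfolding entails_def modsSet_single mods_fmOf using w by (auto simp: mods_simps)
    from C9[OF this, of P] w show ?thesis unfolding ordc_def G_def mods_fmOf by blast
  qed
  show ?B
  proof (intro exI[of _ ordc] conjI allI impI)
    show "faithful_assignment Bel ordc" by (rule faithful)
  next
    fix P a show "K P a = M P \<union> minset (mods (Neg a)) (ordc P)" by (rule repr)
  next
    fix P a and w1 w2 :: "'v world" assume "w1 \<in> mods a" "w2 \<in> mods a"
    then show "ordc P w1 w2 \<longleftrightarrow> ordc (c P a) w1 w2" by (rule CR8)
  next
    fix P a and w1 w2 :: "'v world" assume "w1 \<in> mods (Neg a)" "w2 \<in> mods (Neg a)"
    then show "ordc P w1 w2 \<longleftrightarrow> ordc (c P a) w1 w2" by (rule CR9)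
  qed
next
  assume ?B
  then obtain ord where R0: "\<forall>P a. modsSet (Bel (c P a)) = modsSet (Bel P) \<union> minset (mods (Neg a)) (ord P)"
    and CR80: "\<forall>P a w1 w2. w1 \<in> mods a \<longrightarrow> w2 \<in> mods a \<longrightarrow> (ord P w1 w2 \<longleftrightarrow> ord (c P a) w1 w2)"
    and CR90: "\<forall>P a w1 w2. w1 \<in> mods (Neg a) \<longrightarrow> w2 \<in> mods (Neg a) \<longrightarrow> (ord P w1 w2 \<longleftrightarrow> ord (c P a) w1 w2)"
    by (elim exE conjE) (rule that; assumption)
  note R = R0[rule_format] and CR8 = CR80[rule_format] and CR9 = CR90[rule_format]
  have C8: "alpha_eq a (Bel (c (c P a) b)) (Bel (c P b))" if e: "entails {Neg a} b" for P a b
  proof -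
    have sub: "- mods b \<subseteq> mods a" using e unfolding entails_def modsSet_single mods_simps by blast
    have me: "minset (- mods b) (ord (c P a)) = minset (- mods b) (ord P)"
      by (rule minset_cong, rule CR8[symmetric]) (use sub in blast)+
    have s1: "minset (- mods b) (ord P) \<subseteq> mods a" using minset_sub[of "- mods b" "ord P"] sub by (rule order_trans)
    have s2: "minset (- mods a) (ord P) \<inter> mods a = {}" using minset_sub[of "- mods a" "ord P"] by blast
    have e1: "modsSet (Bel (c (c P a) b)) = (modsSet (Bel P) \<union> minset (- mods a) (ord P)) \<union> minset (- mods b) (ord P)"
      unfolding R[of "c P a" b] R[of P a] mods_simps me ..
    have e2: "modsSet (Bel (c P b)) = modsSet (Bel P) \<union> minset (- mods b) (ord P)"
      unfolding R[of P b] mods_simps ..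
    show ?thesis unfolding alpha_eq_def e1 e2 using s1 s2 by blast
  qed
  have C9: "alpha_eq (Neg b) (Bel (c (c P a) b)) (Bel (c P b))" if e: "entails {a} b" for P a b
  proof -
    have sub: "- mods b \<subseteq> - mods a" using e unfolding entails_def modsSet_single by blast
    have me: "minset (- mods b) (ord (c P a)) = minset (- mods b) (ord P)"
      by (rule minset_cong, rule CR9[symmetric]) (use sub in \<open>auto simp: mods_simps\<close>)
    have s1: "minset (- mods a) (ord P) \<inter> - mods b \<subseteq> minset (- mods b) (ord P)"
      by (rule minset_anti[OF sub])
    have e1: "modsSet (Bel (c (c P a) b)) = (modsSet (Bel P) \<union> minset (- mods a) (ord P)) \<union> minset (- mods b) (ord P)"
      unfolding R[of "c P a" b] R[of P a] mods_simps me ..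
    have e2: "modsSet (Bel (c P b)) = modsSet (Bel P) \<union> minset (- mods b) (ord P)"
      unfolding R[of P b] mods_simps ..
    show ?thesis unfolding alpha_eq_def e1 e2 mods_simps using s1 by blast
  qed
  show ?A using C8 C9 by simp
qed

end
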